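(* Let $q$ be a prime power, $m$ odd, $3\le n\le m$, let $g_1,\dots,g_n\in\mathbb{F}_{q^m}$ be linearly independent over $\mathbb{F}_q$, and let $\mathcal{G}$ be the Gabidulin code of dimension $k=1$ with respect to $g_1,\dots,g_n$. Let $f(x)=x^{q^2}+cx$ with $c\in\mathbb{F}_{q^m}$. Then $\sigma_f=(f(g_1),\dots,f(g_n))$ is a deep hole of $\mathcal{G}$ in the rank metric, i.e. $d_R(\sigma_f,\mathcal{G})=n-1$.
   Context: $\mathcal{L}_q(x,\mathbb{F}_{q^m})$ is the set of $q$-linearized polynomials $\sum_i a_ix^{q^i}$ with $a_i\in\mathbb{F}_{q^m}$, $q$-degree being the largest $i$ with $a_i\ne0$. Rank distance: $d_R(\mathbf{u},\mathbf{v})=\dim_{\mathbb{F}_q}\langle u_1-v_1,\dots,u_n-v_n\rangle$, $d_R(\mathbf{u},C)=\min_{\mathbf{c}\in C}d_R(\mathbf{u},\mathbf{c})$; a deep hole is a word attaining the covering radius $\max_{\mathbf{u}}d_R(\mathbf{u},C)$, which for $\mathcal{G}$ is $n-k$. The Gabidulin code of dimension $k$ is $\mathcal{G}=\{(v(g_1),\dots,v(g_n)) : v\in\mathcal{L}_q(x,\mathbb{F}_{q^m}),\ v=0\text{ or }\deg_q(v)<k\}$; for $k=1$ this is $\{(\lambda g_1,\dots,\lambda g_n):\lambda\in\mathbb{F}_{q^m}\}$. *)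

theory Defs
  imports "HOL-Computational_Algebra.Primes"
begin

text \<open>The ambient field F_{q^m} is a finite field type 'a; the base field F_q is
  a subfield K of 'a with card K = q, and CARD('a) = q^m.\<close>

definition is_subfield :: "'a::field set \<Rightarrow> bool" where
  "is_subfield K \<longleftrightarrow> 0 \<in> K \<and> 1 \<in> K \<and>
     (\<forall>x\<in>K. \<forall>y\<in>K. x + y \<in> K \<and> x * y \<in> K) \<and>
     (\<forall>x\<in>K. - x \<in> K \<and> inverse x \<in> K)"

definition kspan :: "'a::field set \<Rightarrow> 'a set \<Rightarrow> 'a set" where
  "kspan K S = {(\<Sum>s\<in>B. a s * s) | B a. finite B \<and> B \<subseteq> S \<and> (\<forall>s\<in>B. a s \<in> K)}"

definition kindep :: "'a::field set \<Rightarrow> 'a set \<Rightarrow> bool" where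
  "kindep K B \<longleftrightarrow> finite B \<and>
     (\<forall>a. (\<forall>b\<in>B. a b \<in> K) \<and> (\<Sum>b\<in>B. a b * b) = 0 \<longrightarrow> (\<forall>b\<in>B. a b = 0))"

definition kdim :: "'a::field set \<Rightarrow> 'a set \<Rightarrow> nat" where
  "kdim K V = (THE d. \<exists>B. B \<subseteq> V \<and> kindep K B \<and> kspan K B = V \<and> card B = d)"

definition kindep_family :: "'a::field set \<Rightarrow> nat \<Rightarrow> (nat \<Rightarrow> 'a) \<Rightarrow> bool" where
  "kindep_family K n g \<longleftrightarrow>
     (\<forall>a. (\<forall>i<n. a i \<in> K) \<and> (\<Sum>i<n. a i * g i) = 0 \<longrightarrow> (\<forall>i<n. a i = 0))"

text \<open>Words of length n are functions nat => 'a, only indices i < n matter.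
  Rank distance d_R(u,v) = dim_K <u_1 - v_1, ..., u_n - v_n>.\<close>
definition rank_dist :: "'a::field set \<Rightarrow> nat \<Rightarrow> (nat \<Rightarrow> 'a) \<Rightarrow> (nat \<Rightarrow> 'a) \<Rightarrow> nat" where
  "rank_dist K n u v = kdim K (kspan K ((\<lambda>i. u i - v i) ` {..<n}))"

definition gabidulin :: "nat \<Rightarrow> nat \<Rightarrow> nat \<Rightarrow> (nat \<Rightarrow> 'a::field) \<Rightarrow> (nat \<Rightarrow> 'a) set" where
  "gabidulin q n k g = {(\<lambda>i. \<Sum>j<k. a j * g i ^ (q ^ j)) | a. True}"

definition rank_dist_code :: "'a::field set \<Rightarrow> nat \<Rightarrow> (nat \<Rightarrow> 'a) \<Rightarrow> (nat \<Rightarrow> 'a) set \<Rightarrow> nat" where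
  "rank_dist_code K n u C = Min (rank_dist K n u ` C)"

end

theory Submission
  imports Defs "HOL-Computational_Algebra.Polynomial" "HOL-Number_Theory.Residues"
begin

lemma subfield_sum:
  assumes "is_subfield K" "\<And>i. i \<in> I \<Longrightarrow> f i \<in> K"
  shows "sum f I \<in> K"
  using assms(2)
proof (induct I rule: infinite_finite_induct)
  case (infinite A) then show ?case using assms(1) by (simp add: is_subfield_def)
next
  case empty then show ?case using assms(1) by (simp add: is_subfield_def)
next
  case (insert x F) then show ?case using assms(1) by (simp add: is_subfield_def)
qed

lemma subfield_diff:
  assumes "is_subfield K" "x \<in> K" "y \<in> K" shows "x - y \<in> K"
  using assms unfolding is_subfield_def by (metis diff_conv_add_uminus)

lemma subfield_mult:
  assumes "is_subfield K" "x \<in> K" "y \<in> K" shows "x * y \<in> K"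
  using assms unfolding is_subfield_def by blast

lemma subfield_neg:
  assumes "is_subfield K" "x \<in> K" shows "- x \<in> K"
  using assms unfolding is_subfield_def by blast

lemma subfield_inv:
  assumes "is_subfield K" "x \<in> K" shows "inverse x \<in> K"
  using assms unfolding is_subfield_def by blast

lemma kspan_image:
  assumes K: "is_subfield K" and fin: "finite I"
  shows "kspan K (h ` I) = {(\<Sum>i\<in>I. a i * h i) | a. \<forall>i\<in>I. a i \<in> K}"
proof
  show "kspan K (h ` I) \<subseteq> {(\<Sum>i\<in>I. a i * h i) | a. \<forall>i\<in>I. a i \<in> K}"
  proof
    fix x assume "x \<in> kspan K (h ` I)"
    then obtain B b where x: "x = (\<Sum>s\<in>B. b s * s)" and B: "finite B" "B \<subseteq> h ` I"
      and bK: "\<forall>s\<in>B. b s \<in> K" unfolding kspan_def by blast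
    define J where "J = inv_into I h ` B"
    have JI: "J \<subseteq> I" using B unfolding J_def by (auto intro: inv_into_into)
    define a where "a i = (if i \<in> J then b (h i) else 0)" for i
    have "(\<Sum>i\<in>I. a i * h i) = (\<Sum>i\<in>I. if i \<in> J then b (h i) * h i else 0)"
      unfolding a_def by (intro sum.cong) auto
    also have "\<dots> = (\<Sum>i\<in>I \<inter> J. b (h i) * h i)" by (rule sum.inter_restrict[OF fin, symmetric])
    also have "I \<inter> J = J" using JI by blast
    also have "(\<Sum>i\<in>J. b (h i) * h i) = (\<Sum>s\<in>B. b (h (inv_into I h s)) * h (inv_into I h s))"
      unfolding J_def using B by (subst sum.reindex) (auto intro: inj_on_inv_into)
    also have "\<dots> = x" unfolding x using B by (intro sum.cong) (auto simp: f_inv_into_f)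
    finally have "x = (\<Sum>i\<in>I. a i * h i)" ..
    moreover have "\<forall>i\<in>I. a i \<in> K"
      using bK K JI unfolding a_def J_def is_subfield_def
      by (auto simp: f_inv_into_f) (use B in \<open>auto simp: f_inv_into_f\<close>)
    ultimately show "x \<in> {(\<Sum>i\<in>I. a i * h i) | a. \<forall>i\<in>I. a i \<in> K}" by blast
  qed
next
  show "{(\<Sum>i\<in>I. a i * h i) | a. \<forall>i\<in>I. a i \<in> K} \<subseteq> kspan K (h ` I)"
  proof
    fix x assume "x \<in> {(\<Sum>i\<in>I. a i * h i) | a. \<forall>i\<in>I. a i \<in> K}"
    then obtain a where x: "x = (\<Sum>i\<in>I. a i * h i)" and aK: "\<forall>i\<in>I. a i \<in> K" by blast
    define b where "b s = (\<Sum>i\<in>{i\<in>I. h i = s}. a i)" for s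
    have "x = (\<Sum>s\<in>h ` I. \<Sum>i\<in>{i\<in>I. h i = s}. a i * h i)"
      unfolding x using fin by (rule sum.image_gen)
    also have "\<dots> = (\<Sum>s\<in>h ` I. b s * s)"
      unfolding b_def sum_distrib_right by (intro sum.cong refl) auto
    finally have "x = (\<Sum>s\<in>h ` I. b s * s)" .
    moreover have "\<forall>s\<in>h ` I. b s \<in> K"
      unfolding b_def using aK by (auto intro!: subfield_sum[OF K])
    ultimately show "x \<in> kspan K (h ` I)" unfolding kspan_def using fin by blast
  qed
qed

lemma kspan_eq:
  assumes K: "is_subfield K" and fin: "finite Y"
  shows "kspan K Y = {(\<Sum>y\<in>Y. a y * y) | a. \<forall>y\<in>Y. a y \<in> K}"
  using kspan_image[OF K fin, of "\<lambda>x. x"] by simp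

lemma card_span_indep:
  assumes K: "is_subfield K" "card K = q" "finite K" and fin: "finite I"
    and ind: "\<forall>a. (\<forall>i\<in>I. a i \<in> K) \<and> (\<Sum>i\<in>I. a i * h i) = 0 \<longrightarrow> (\<forall>i\<in>I. a i = 0)"
  shows "card {(\<Sum>i\<in>I. a i * h i) | a. \<forall>i\<in>I. a i \<in> K} = q ^ card I"
proof -
  let ?phi = "\<lambda>a. \<Sum>i\<in>I. a i * h i"
  have eq: "{(\<Sum>i\<in>I. a i * h i) | a. \<forall>i\<in>I. a i \<in> K} = ?phi ` (PiE I (\<lambda>_. K))"
  proof
    show "{(\<Sum>i\<in>I. a i * h i) | a. \<forall>i\<in>I. a i \<in> K} \<subseteq> ?phi ` (PiE I (\<lambda>_. K))"
    proof
      fix x assume "x \<in> {(\<Sum>i\<in>I. a i * h i) | a. \<forall>i\<in>I. a i \<in> K}"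
      then obtain a where x: "x = ?phi a" and aK: "\<forall>i\<in>I. a i \<in> K" by blast
      have r: "restrict a I \<in> PiE I (\<lambda>_. K)" using aK by auto
      have "x = ?phi (restrict a I)" unfolding x by (intro sum.cong) auto
      then show "x \<in> ?phi ` (PiE I (\<lambda>_. K))" using r by (rule image_eqI)
    qed
  next
    show "?phi ` (PiE I (\<lambda>_. K)) \<subseteq> {(\<Sum>i\<in>I. a i * h i) | a. \<forall>i\<in>I. a i \<in> K}"
    proof
      fix x assume "x \<in> ?phi ` (PiE I (\<lambda>_. K))"
      then obtain a where a: "a \<in> PiE I (\<lambda>_. K)" and x: "x = ?phi a" by blast
      have "\<forall>i\<in>I. a i \<in> K" using a by (simp add: PiE_iff)
      then show "x \<in> {(\<Sum>i\<in>I. a i * h i) | a. \<forall>i\<in>I. a i \<in> K}" using x by blast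
    qed
  qed
  have inj: "inj_on ?phi (PiE I (\<lambda>_. K))"
  proof (rule inj_onI)
    fix a b assume a: "a \<in> PiE I (\<lambda>_. K)" and b: "b \<in> PiE I (\<lambda>_. K)" and e: "?phi a = ?phi b"
    have "(\<Sum>i\<in>I. (a i - b i) * h i) = ?phi a - ?phi b"
      by (simp add: left_diff_distrib sum_subtractf)
    also have "\<dots> = 0" using e by simp
    finally have "(\<Sum>i\<in>I. (a i - b i) * h i) = 0" .
    moreover have "\<forall>i\<in>I. a i - b i \<in> K" using a b by (auto intro!: subfield_diff[OF K(1)])
    ultimately have "\<forall>i\<in>I. a i - b i = 0" using ind[rule_format, of "\<lambda>i. a i - b i"] by simp
    then show "a = b" using a b by (intro PiE_ext[OF a b]) auto
  qed
  have "card (?phi ` (PiE I (\<lambda>_. K))) = card (PiE I (\<lambda>_. K :: 'a set))"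
    by (rule card_image[OF inj])
  also have "\<dots> = q ^ card I" using fin K by (simp add: card_PiE)
  finally show ?thesis using eq by simp
qed

lemma kspan_mono:
  assumes "X \<subseteq> Y" shows "kspan K X \<subseteq> kspan K Y"
  using assms unfolding kspan_def by blast

lemma kspan_self:
  assumes K: "is_subfield K" shows "X \<subseteq> kspan K X"
proof
  fix x assume "x \<in> X"
  then show "x \<in> kspan K X" unfolding kspan_def
    using K unfolding is_subfield_def
    by (intro CollectI exI[of _ "{x}"] exI[of _ "\<lambda>_. 1"]) auto
qed

lemma kspan_sub:
  assumes K: "is_subfield K" and sub: "X \<subseteq> kspan K Y"
  shows "kspan K (X::'a::{finite,field} set) \<subseteq> kspan K Y"
proof
  have kY: "kspan K Y = {(\<Sum>y\<in>Y. c y * y) | c. \<forall>y\<in>Y. c y \<in> K}" by (rule kspan_eq[OF K finite])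
  have kX: "kspan K X = {(\<Sum>y\<in>X. c y * y) | c. \<forall>y\<in>X. c y \<in> K}" by (rule kspan_eq[OF K finite])
  fix x assume "x \<in> kspan K X"
  then obtain a where x: "x = (\<Sum>z\<in>X. a z * z)" and aK: "\<forall>z\<in>X. a z \<in> K"
    unfolding kX by blast
  have ex: "\<forall>z\<in>X. \<exists>c. z = (\<Sum>y\<in>Y. c y * y) \<and> (\<forall>y\<in>Y. c y \<in> K)"
  proof
    fix z assume "z \<in> X"
    then have "z \<in> {(\<Sum>y\<in>Y. c y * y) | c. \<forall>y\<in>Y. c y \<in> K}"
      using sub unfolding kY by blast
    then show "\<exists>c. z = (\<Sum>y\<in>Y. c y * y) \<and> (\<forall>y\<in>Y. c y \<in> K)" by blast
  qed
  obtain c where c: "\<forall>z\<in>X. z = (\<Sum>y\<in>Y. c z y * y) \<and> (\<forall>y\<in>Y. c z y \<in> K)"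
    using bchoice[OF ex] by blast
  define S where "S z = (\<Sum>y\<in>Y. c z y * y)" for z
  have Se: "S z = z" if "z \<in> X" for z
    unfolding S_def by (rule sym[OF conjunct1[OF bspec[OF c that]]])
  have cK: "c z y \<in> K" if "z \<in> X" "y \<in> Y" for z y
    using conjunct2[OF bspec[OF c that(1)]] that(2) by blast
  have "x = (\<Sum>z\<in>X. a z * S z)"
    unfolding x by (intro sum.cong refl) (simp add: Se)
  also have "\<dots> = (\<Sum>z\<in>X. \<Sum>y\<in>Y. a z * c z y * y)"
    unfolding S_def by (simp add: sum_distrib_left mult.assoc)
  also have "\<dots> = (\<Sum>y\<in>Y. \<Sum>z\<in>X. a z * c z y * y)"
    by (rule sum.swap)
  also have "\<dots> = (\<Sum>y\<in>Y. (\<Sum>z\<in>X. a z * c z y) * y)"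
    by (simp add: sum_distrib_right)
  finally have xe: "x = (\<Sum>y\<in>Y. (\<Sum>z\<in>X. a z * c z y) * y)" .
  have coef: "\<forall>y\<in>Y. (\<Sum>z\<in>X. a z * c z y) \<in> K"
    using aK cK by (auto intro!: subfield_sum[OF K] subfield_mult[OF K])
  show "x \<in> kspan K Y" unfolding kY
    by (intro CollectI exI[of _ "\<lambda>y. \<Sum>z\<in>X. a z * c z y"] conjI xe coef)
qed

lemma basis_exists:
  assumes K: "is_subfield K"
  shows "\<exists>B. B \<subseteq> (S::'a::{finite,field} set) \<and> kindep K B \<and> kspan K B = kspan K S"
proof -
  define P where "P B \<longleftrightarrow> B \<subseteq> S \<and> kspan K B = kspan K S" for B
  have ex: "\<exists>d B. P B \<and> card B = d" using P_def by blast
  define d where "d = (LEAST d. \<exists>B. P B \<and> card B = d)"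
  obtain B where PB: "P B" and cB: "card B = d"
    using LeastI_ex[of "\<lambda>d. \<exists>B. P B \<and> card B = d"] ex unfolding d_def by blast
  have min: "\<And>B'. P B' \<Longrightarrow> d \<le> card B'" unfolding d_def by (auto intro: Least_le)
  have "kindep K B"
    unfolding kindep_def
  proof (intro conjI finite allI impI ballI, rule ccontr)
    fix a b0 assume h: "(\<forall>b\<in>B. a b \<in> K) \<and> (\<Sum>b\<in>B. a b * b) = 0" and b0: "b0 \<in> B"
      and nz: "a b0 \<noteq> 0"
    let ?s = "(\<Sum>b\<in>B - {b0}. a b * b)"
    have "a b0 * b0 + ?s = 0" using h b0 by (simp add: sum.remove)
    hence e1: "a b0 * b0 = - ?s" by (simp add: eq_neg_iff_add_eq_0)
    have "b0 = inverse (a b0) * (a b0 * b0)" using nz by simp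
    also have "\<dots> = inverse (a b0) * (- ?s)" using e1 by simp
    also have "\<dots> = (\<Sum>b\<in>B - {b0}. (- a b * inverse (a b0)) * b)"
      by (simp add: sum_distrib_left sum_negf[symmetric] mult_ac)
    finally have b0e: "b0 = (\<Sum>b\<in>B - {b0}. (- a b * inverse (a b0)) * b)" .
    have "\<forall>b\<in>B - {b0}. - a b * inverse (a b0) \<in> K"
      using h b0 by (auto intro!: subfield_mult[OF K] subfield_neg[OF K] subfield_inv[OF K])
    hence "b0 \<in> {(\<Sum>y\<in>B - {b0}. c y * y) | c. \<forall>y\<in>B - {b0}. c y \<in> K}"
      by (intro CollectI exI[of _ "\<lambda>b. - a b * inverse (a b0)"] conjI b0e)
    hence "b0 \<in> kspan K (B - {b0})" using kspan_eq[OF K finite, of "B - {b0}"] by simp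
    hence "B \<subseteq> kspan K (B - {b0})" using kspan_self[OF K, of "B - {b0}"] by blast
    hence "kspan K B \<subseteq> kspan K (B - {b0})" by (rule kspan_sub[OF K])
    moreover have "kspan K (B - {b0}) \<subseteq> kspan K B" by (rule kspan_mono) blast
    ultimately have "P (B - {b0})" using PB unfolding P_def by blast
    hence "d \<le> card (B - {b0})" by (rule min)
    moreover have "card (B - {b0}) < card B" by (rule card_Diff1_less[OF finite b0])
    ultimately show False using cB by simp
  qed
  then show ?thesis using PB unfolding P_def by blast
qed

lemma kindep_card_span:
  assumes K: "is_subfield K" "card K = q" and ind: "kindep K (B::'a::{finite,field} set)"
  shows "card (kspan K B) = q ^ card B"
  using card_span_indep[OF K(1,2) finite finite, where h = "\<lambda>x. x"] ind kspan_eq[OF K(1)]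
  unfolding kindep_def by auto

lemma subfield_q:
  fixes K :: "'a::{finite,field} set"
  assumes K: "is_subfield K" "card K = q" shows "1 < q"
proof -
  have "{0, 1} \<subseteq> K" using K unfolding is_subfield_def by auto
  hence "card {0, 1::'a} \<le> card K" by (intro card_mono) auto
  then show ?thesis using K by simp
qed

lemma kdim_card:
  assumes K: "is_subfield K" "card K = q"
  shows "card (kspan K S) = q ^ kdim K (kspan K (S::'a::{finite,field} set))"
proof -
  have q2: "1 < q" using subfield_q[OF K] .
  obtain B where B: "B \<subseteq> S" "kindep K B" "kspan K B = kspan K S"
    using basis_exists[OF K(1)] by blast
  have cB: "card (kspan K S) = q ^ card B" using kindep_card_span[OF K B(2)] B(3) by simp
  have "kdim K (kspan K S) = card B"
    unfolding kdim_def
  proof (rule the_equality)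
    show "\<exists>B'. B' \<subseteq> kspan K S \<and> kindep K B' \<and> kspan K B' = kspan K S \<and> card B' = card B"
      using B kspan_self[OF K(1), of S] by blast
  next
    fix d assume "\<exists>B'. B' \<subseteq> kspan K S \<and> kindep K B' \<and> kspan K B' = kspan K S \<and> card B' = d"
    then obtain B' where B': "kindep K B'" "kspan K B' = kspan K S" "card B' = d" by blast
    have "q ^ d = q ^ card B" using kindep_card_span[OF K B'(1)] B' cB by simp
    then show "d = card B" using q2 by (simp add: power_inject_exp)
  qed
  with cB show ?thesis by simp
qed

lemma subfield_power_q:
  fixes K :: "'a::{finite,field} set"
  assumes K: "is_subfield K" "card K = q" and k: "k \<in> K"
  shows "k ^ q = k"
proof (cases "k = 0")
  case True then show ?thesis using subfield_q[OF K] by simp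
next
  case False
  have zK: "0 \<in> K" using K unfolding is_subfield_def by auto
  have ik: "inverse k \<in> K" using subfield_inv[OF K(1) k] .
  have P: "(\<Prod>y\<in>K-{0}. k * y) = (\<Prod>y\<in>K-{0}. y)"
  proof (rule prod.reindex_bij_witness[of _ "\<lambda>y. y * inverse k" "\<lambda>y. k * y"])
    fix a assume a: "a \<in> K - {0}"
    show "k * a * inverse k = a" using False by simp
    show "k * a \<in> K - {0}" using a False subfield_mult[OF K(1) k] by simp
    show "k * a = k * a" by (rule refl)
  next
    fix b assume b: "b \<in> K - {0}"
    show "k * (b * inverse k) = b" using False by simp
    show "b * inverse k \<in> K - {0}" using b False subfield_mult[OF K(1) _ ik] by simp
  qed
  have "(\<Prod>y\<in>K-{0}. k * y) = (\<Prod>y\<in>K-{0}. k) * (\<Prod>y\<in>K-{0}. y)"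
    by (rule prod.distrib)
  also have "(\<Prod>y\<in>K-{0}. k) = k ^ card (K - {0})" by (rule prod_constant)
  also have "card (K - {0}) = q - 1" using zK K(2) by (simp add: card_Diff_singleton)
  finally have e: "(\<Prod>y\<in>K-{0}. y) = k ^ (q - 1) * (\<Prod>y\<in>K-{0}. y)" using P by simp
  have "(\<Prod>y\<in>K-{0}. y) \<noteq> 0" by simp
  with e have k1: "k ^ (q - 1) = 1" by (metis mult_cancel_right2)
  have "q = Suc (q - 1)" using subfield_q[OF K] by simp
  then have "k ^ q = k * k ^ (q - 1)" by (metis power_Suc)
  then show ?thesis using k1 by simp
qed

lemma subfield_UNIV: "is_subfield (UNIV :: 'a::field set)"
  unfolding is_subfield_def by auto

lemma power_card_UNIV:
  fixes x :: "'a::{finite,field}"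
  shows "x ^ card (UNIV :: 'a set) = x"
  by (rule subfield_power_q[OF subfield_UNIV refl]) simp

lemma odd_power_trick:
  fixes t :: "'a::field"
  assumes "t ^ (q ^ 2) = t" "t ^ (q ^ m) = t" "odd m"
  shows "t ^ q = t"
proof -
  obtain j where m: "m = 2 * j + 1" using assms(3) oddE by blast
  have "t ^ (q ^ (2 * j)) = t" for j
  proof (induct j)
    case 0 then show ?case by simp
  next
    case (Suc j)
    have "t ^ (q ^ (2 * Suc j)) = (t ^ (q ^ 2)) ^ (q ^ (2 * j))"
      by (simp only: mult_Suc_right power_add power_mult)
    then show ?case using Suc assms(1) by simp
  qed
  moreover have "t ^ (q ^ m) = (t ^ (q ^ (2 * j))) ^ q"
    unfolding m by (simp only: power_add power_one_right power_mult)
  ultimately have "t = (t ^ (q ^ (2 * j))) ^ q" using assms(2) by simp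
  then show ?thesis using \<open>t ^ (q ^ (2 * j)) = t\<close> by simp
qed

lemma roots_q_bound:
  fixes q :: nat
  assumes "1 < q"
  shows "card {t::'a::{finite,field}. t ^ q = t} \<le> q"
proof -
  obtain k where q: "q = Suc (Suc k)" using assms by (metis less_imp_Suc_add add_Suc_right plus_1_eq_Suc add.commute Suc_lessE)
  define p :: "'a poly" where "p = Polynomial.monom 1 q - [:0, 1:]"
  have ev: "poly p x = x ^ q - x" for x unfolding p_def by (simp add: poly_monom)
  have "Polynomial.coeff p q = 1" unfolding p_def q by (simp add: coeff_monom)
  hence p0: "p \<noteq> 0" by auto
  have "degree p \<le> max (degree (Polynomial.monom (1::'a) q)) (degree [:0, 1::'a:])"
    unfolding p_def by (rule degree_diff_le_max)
  also have "\<dots> = q" using assms by (simp add: degree_monom_eq)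
  finally have dp: "degree p \<le> q" .
  have "{t::'a. t ^ q = t} = {x. poly p x = 0}" by (auto simp: ev)
  then show ?thesis using card_poly_roots_bound[OF p0] dp by simp
qed

lemma char_eq:
  assumes "prime p" "card (UNIV :: 'a::{finite,field} set) = p ^ e" "e > 0"
  shows "CHAR('a) = p"
proof -
  have cpos: "CHAR('a) > 0" by (rule finite_imp_CHAR_pos) simp
  have pc: "prime CHAR('a)" by (rule prime_CHAR_semidom[OF cpos])
  have "CHAR('a) dvd p ^ e" using CHAR_dvd_CARD[where 'a='a] assms(2) by simp
  then have "CHAR('a) dvd p" using pc prime_dvd_power by blast
  then show ?thesis using pc assms(1) by (simp add: primes_dvd_imp_eq)
qed

lemma kernel_bound:
  fixes a' :: "'a::{finite,field}"
  assumes q1: "1 < q" and hm: "card (UNIV::'a set) = q ^ m" and odd: "odd m"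
  shows "card {z::'a. z ^ (q^2) + a' * z = 0} \<le> q"
proof (cases "\<exists>z0. z0 \<noteq> 0 \<and> z0 ^ (q^2) + a' * z0 = 0")
  case False
  hence "{z::'a. z ^ (q^2) + a' * z = 0} \<subseteq> {0}" by auto
  hence "card {z::'a. z ^ (q^2) + a' * z = 0} \<le> card {0::'a}" by (intro card_mono) auto
  then show ?thesis using q1 by simp
next
  case True
  then obtain z0 where z0: "z0 \<noteq> 0" "z0 ^ (q^2) + a' * z0 = 0" by blast
  have a0: "a' \<noteq> 0" using z0 by auto
  have z0q: "z0 ^ (q^2) = - (a' * z0)" using z0 by (simp add: eq_neg_iff_add_eq_0)
  have "{z. z ^ (q^2) + a' * z = 0} \<subseteq> (\<lambda>t. z0 * t) ` {t. t ^ q = t}"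
  proof
    fix z assume z: "z \<in> {z. z ^ (q^2) + a' * z = 0}"
    have zq: "z ^ (q^2) = - (a' * z)" using z by (simp add: eq_neg_iff_add_eq_0)
    define t where "t = z / z0"
    have "t ^ (q^2) = z ^ (q^2) / z0 ^ (q^2)" unfolding t_def by (simp add: power_divide)
    also have "\<dots> = t" unfolding zq z0q t_def using a0 z0 by simp
    finally have t1: "t ^ (q^2) = t" .
    have t2: "t ^ (q ^ m) = t" using power_card_UNIV[of t] hm by simp
    have "t ^ q = t" by (rule odd_power_trick[OF t1 t2 odd])
    moreover have "z = z0 * t" unfolding t_def using z0 by simp
    ultimately show "z \<in> (\<lambda>t. z0 * t) ` {t. t ^ q = t}" by blast
  qed
  hence "card {z. z ^ (q^2) + a' * z = 0} \<le> card ((\<lambda>t. z0 * t) ` {t. t ^ q = t})"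
    by (intro card_mono) auto
  also have "\<dots> \<le> card {t::'a. t ^ q = t}" by (rule card_image_le) simp
  also have "\<dots> \<le> q" by (rule roots_q_bound[OF q1])
  finally show ?thesis .
qed

theorem proposition6:
  fixes K :: "'a::{finite,field} set" and q m n :: nat and g :: "nat \<Rightarrow> 'a" and c :: 'a
  assumes "is_subfield K" and "card K = q" and "card (UNIV :: 'a set) = q ^ m"
    and "\<exists>p r. prime p \<and> r > 0 \<and> q = p ^ r"
    and "odd m" and "3 \<le> n" and "n \<le> m"
    and "kindep_family K n g"
  shows "rank_dist_code K n (\<lambda>i. g i ^ (q ^ 2) + c * g i) (gabidulin q n 1 g) = n - 1"
proof -
  note K = assms(1,2)
  have q1: "1 < q" by (rule subfield_q[OF K])
  obtain p r where pr: "prime p" "r > 0" "q = p ^ r" using assms(4) by blast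
  have m0: "m > 0" using assms(6,7) by simp
  have cU: "card (UNIV :: 'a set) = p ^ (r * m)" using assms(3) pr(3) by (simp add: power_mult)
  have chr: "CHAR('a) = p" by (rule char_eq[OF pr(1) cU]) (use pr(2) m0 in simp)
  define Q where "Q = q ^ 2"
  have QC: "Q = CHAR('a) ^ (r * 2)" unfolding Q_def chr pr(3) by (simp add: power_mult)
  have pc: "prime CHAR('a)" using chr pr by simp
  have frob_sum: "\<And>(f::nat\<Rightarrow>'a) I. (\<Sum>i\<in>I. f i) ^ Q = (\<Sum>i\<in>I. f i ^ Q)"
    using freshmans_dream_sum'[OF pc QC] by blast
  have frob_add: "\<And>x y::'a. (x + y) ^ Q = x ^ Q + y ^ Q"
    using freshmans_dream'[OF pc QC] by blast
  have frob_diff: "(x - y) ^ Q = x ^ Q - y ^ Q" for x y :: 'a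
  proof -
    have "(x - y) ^ Q + y ^ Q = x ^ Q" using frob_add[of "x - y" y] by simp
    then show ?thesis by (simp add: eq_diff_eq)
  qed
  have KQ: "\<And>k. k \<in> K \<Longrightarrow> k ^ Q = k"
    using subfield_power_q[OF K] unfolding Q_def by (simp add: power2_eq_square power_mult)
  define V where "V = {(\<Sum>i\<in>{..<n}. a i * g i) | a. \<forall>i\<in>{..<n}. a i \<in> K}"
  have cV: "card V = q ^ n"
    unfolding V_def using card_span_indep[OF K(1,2) finite[of K] finite_lessThan[of n], where h=g] assms(8)
    unfolding kindep_family_def by auto
  define L where "L a' z = z ^ Q + a' * z" for a' z :: 'a
  have spanL: "kspan K ((\<lambda>i. L a' (g i)) ` {..<n}) = L a' ` V" for a'
  proof -
    have eq: "(\<Sum>i\<in>{..<n}. a i * L a' (g i)) = L a' (\<Sum>i\<in>{..<n}. a i * g i)"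
      if "\<forall>i\<in>{..<n}. a i \<in> K" for a
    proof -
      have "(\<Sum>i\<in>{..<n}. a i * g i) ^ Q = (\<Sum>i\<in>{..<n}. (a i * g i) ^ Q)" by (rule frob_sum)
      also have "\<dots> = (\<Sum>i\<in>{..<n}. a i * g i ^ Q)"
        by (intro sum.cong refl) (simp add: power_mult_distrib KQ that)
      finally show ?thesis unfolding L_def
        by (simp add: distrib_left sum.distrib sum_distrib_left mult_ac)
    qed
    have "kspan K ((\<lambda>i. L a' (g i)) ` {..<n}) = {(\<Sum>i\<in>{..<n}. a i * L a' (g i)) | a. \<forall>i\<in>{..<n}. a i \<in> K}"
      by (rule kspan_image[OF assms(1)]) simp
    also have "\<dots> = L a' ` V"
    proof (rule equalityI; rule subsetI)
      fix x assume "x \<in> {(\<Sum>i\<in>{..<n}. a i * L a' (g i)) | a. \<forall>i\<in>{..<n}. a i \<in> K}"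
      then obtain a where x: "x = (\<Sum>i\<in>{..<n}. a i * L a' (g i))" and a: "\<forall>i\<in>{..<n}. a i \<in> K"
        by blast
      have "(\<Sum>i\<in>{..<n}. a i * g i) \<in> V" unfolding V_def using a by blast
      moreover have "x = L a' (\<Sum>i\<in>{..<n}. a i * g i)" using x eq[OF a] by simp
      ultimately show "x \<in> L a' ` V" by blast
    next
      fix x assume "x \<in> L a' ` V"
      then obtain v where v: "v \<in> V" "x = L a' v" by blast
      then obtain a where va: "v = (\<Sum>i\<in>{..<n}. a i * g i)" and a: "\<forall>i\<in>{..<n}. a i \<in> K"
        unfolding V_def by blast
      have "x = (\<Sum>i\<in>{..<n}. a i * L a' (g i))" using v(2) va eq[OF a] by simp
      then show "x \<in> {(\<Sum>i\<in>{..<n}. a i * L a' (g i)) | a. \<forall>i\<in>{..<n}. a i \<in> K}"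
        using a by blast
    qed
    finally show ?thesis .
  qed
  define R where "R a' = kdim K (kspan K ((\<lambda>i. L a' (g i)) ` {..<n}))" for a'
  have cardW: "card (L a' ` V) = q ^ R a'" for a'
    using kdim_card[OF K, of "(\<lambda>i. L a' (g i)) ` {..<n}"] spanL unfolding R_def by metis
  have lower: "n - 1 \<le> R a'" for a'
  proof -
    have add: "L a' x - L a' y = L a' (x - y)" for x y
      unfolding L_def using frob_diff by (simp add: algebra_simps)
    have ker: "card {z. L a' z = 0} \<le> q"
      unfolding L_def Q_def by (rule kernel_bound[OF q1 assms(3) assms(5)])
    have VU: "V = (\<Union>y\<in>L a' ` V. {x\<in>V. L a' x = y})" by auto
    have "card (\<Union>y\<in>L a' ` V. {x\<in>V. L a' x = y}) \<le> (\<Sum>y\<in>L a' ` V. card {x\<in>V. L a' x = y})"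
      by (rule card_UN_le) simp
    hence "card V \<le> (\<Sum>y\<in>L a' ` V. card {x\<in>V. L a' x = y})" using VU by simp
    also have "\<dots> \<le> (\<Sum>y\<in>L a' ` V. q)"
    proof (rule sum_mono)
      fix y assume "y \<in> L a' ` V"
      then obtain x0 where x0: "x0 \<in> V" "y = L a' x0" by blast
      have "{x\<in>V. L a' x = y} \<subseteq> (\<lambda>z. x0 + z) ` {z. L a' z = 0}"
      proof
        fix x assume "x \<in> {x\<in>V. L a' x = y}"
        then have "L a' (x - x0) = 0" using add[of x x0] x0 by simp
        then show "x \<in> (\<lambda>z. x0 + z) ` {z. L a' z = 0}" by (intro image_eqI[of _ _ "x - x0"]) auto
      qed
      hence "card {x\<in>V. L a' x = y} \<le> card ((\<lambda>z. x0 + z) ` {z. L a' z = 0})" by (intro card_mono) auto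
      also have "\<dots> \<le> card {z. L a' z = 0}" by (rule card_image_le) simp
      finally show "card {x\<in>V. L a' x = y} \<le> q" using ker by simp
    qed
    also have "\<dots> = q ^ R a' * q" using cardW by simp
    also have "\<dots> = q ^ (R a' + 1)" by simp
    finally have "q ^ n \<le> q ^ (R a' + 1)" using cV by simp
    then have "n \<le> R a' + 1" using q1 power_le_imp_le_exp by blast
    then show ?thesis by simp
  qed
  have n0: "0 < n" using assms(6) by simp
  have g0V: "(\<Sum>i\<in>{..<n}. (if i = 0 then 1 else 0) * g i) = g 0"
  proof -
    have "(\<Sum>i\<in>{..<n}. (if i = 0 then 1 else 0) * g i) = (\<Sum>i\<in>{..<n}. if i = 0 then g i else 0)"
      by (intro sum.cong) auto
    also have "\<dots> = g 0" using n0 by (simp add: sum.delta)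
    finally show ?thesis .
  qed
  have g0: "g 0 \<noteq> 0"
  proof
    assume gz: "g 0 = 0"
    define e :: "nat \<Rightarrow> 'a" where "e i = (if i = 0 then 1 else 0)" for i
    have h: "(\<forall>i<n. e i \<in> K) \<and> (\<Sum>i<n. e i * g i) = 0 \<longrightarrow> (\<forall>i<n. e i = 0)"
      using assms(8) unfolding kindep_family_def by (rule spec)
    have "\<forall>i<n. e i \<in> K" using K(1) unfolding e_def is_subfield_def by simp
    moreover have "(\<Sum>i<n. e i * g i) = 0" using g0V gz unfolding e_def by simp
    ultimately have "e 0 = 0" using h n0 by blast
    then show False unfolding e_def by simp
  qed
  define a0 where "a0 = - (g 0 ^ Q / g 0)"
  have "g 0 \<in> V" unfolding V_def using g0V K(1) unfolding is_subfield_def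
    by (intro CollectI exI[of _ "\<lambda>i. if i = 0 then 1 else 0"]) auto
  moreover have "0 \<in> V" unfolding V_def using K(1) unfolding is_subfield_def
    by (intro CollectI exI[of _ "\<lambda>i. 0"]) auto
  moreover have "L a0 (g 0) = 0" unfolding L_def a0_def using g0 by simp
  moreover have "L a0 0 = 0" unfolding L_def Q_def using q1 by simp
  ultimately have "\<not> inj_on (L a0) V" using g0 by (metis inj_onD)
  then have "card (L a0 ` V) \<noteq> card V" using inj_on_iff_eq_card[of V "L a0"] by simp
  moreover have "card (L a0 ` V) \<le> card V" by (rule card_image_le) simp
  ultimately have "q ^ R a0 < q ^ n" using cardW cV by simp
  then have upper: "R a0 < n" using q1 power_less_imp_less_exp by blast
  have gab: "gabidulin q n 1 g = range (\<lambda>x i. x * g i)"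
  proof
    show "gabidulin q n 1 g \<subseteq> range (\<lambda>x i. x * g i)"
      unfolding gabidulin_def by auto
    show "range (\<lambda>x i. x * g i) \<subseteq> gabidulin q n 1 g"
    proof
      fix v assume "v \<in> range (\<lambda>x i. x * g i)"
      then obtain x where "v = (\<lambda>i. x * g i)" by blast
      then show "v \<in> gabidulin q n 1 g" unfolding gabidulin_def
        by (intro CollectI exI[of _ "\<lambda>_. x"]) simp
    qed
  qed
  have rd: "rank_dist K n (\<lambda>i. g i ^ (q ^ 2) + c * g i) (\<lambda>i. x * g i) = R (c - x)" for x
    unfolding rank_dist_def R_def L_def Q_def by (simp add: algebra_simps)
  have "rank_dist_code K n (\<lambda>i. g i ^ (q ^ 2) + c * g i) (gabidulin q n 1 g)
        = Min (range (\<lambda>x. R (c - x)))"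
    unfolding rank_dist_code_def gab image_image rd ..
  also have "\<dots> = n - 1"
  proof (rule Min_eqI)
    show "finite (range (\<lambda>x. R (c - x)))" by simp
    show "\<And>y. y \<in> range (\<lambda>x. R (c - x)) \<Longrightarrow> n - 1 \<le> y" using lower by auto
    have "R (c - (c - a0)) = n - 1" using lower[of a0] upper by simp
    then show "n - 1 \<in> range (\<lambda>x. R (c - x))" by (metis rangeI)
  qed
  finally show ?thesis .
qed

end
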